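(* Fix $R>0$ and $\delta\in(0,1)$. With probability at least $1-\delta$ over the random initialization $(\mathbf W(0),\mathbf a)$, simultaneously for every $B>0$, the class $$\mathcal F^{\mathbf W(0),\mathbf a}_{R,B}=\{f_{\mathbf W,\mathbf a}:\ \|\mathbf w_r-\mathbf w_r(0)\|_2\le R\ \forall r\in[m],\ \|\mathbf W-\mathbf W(0)\|_F\le B\}$$ satisfies $$\mathcal R_S\big(\mathcal F^{\mathbf W(0),\mathbf a}_{R,B}\big)\le\frac{B}{\sqrt{2n}}\left(1+\left(\frac{2\log\frac2\delta}{m}\right)^{1/4}\right)+\frac{2R^2\sqrt m}{\kappa}+R\sqrt{2\log\frac2\delta}.$$
   Context: $S=\{\mathbf x_1,\dots,\mathbf x_n\}\subset\mathbb R^d$ with $\|\mathbf x_i\|_2=1$ (fixed). Network $f_{\mathbf W,\mathbf a}(\mathbf x)=\frac1{\sqrt m}\sum_{r=1}^m a_r\max\{\mathbf w_r^\top\mathbf x,0\}$, $\mathbf W=(\mathbf w_1,\dots,\mathbf w_m)\in\mathbb R^{d\times m}$. Initialization independently $\mathbf w_r(0)\sim\mathcal N(\mathbf 0,\kappa^2\mathbf I)$, $a_r\sim\mathrm{unif}\{-1,1\}$, $\kappa>0$; $\mathbf a$ is held fixed in the class. The empirical Rademacher complexity of a class $\mathcal F$ of functions $\mathbb R^d\to\mathbb R$ is $\mathcal R_S(\mathcal F)=\frac1n\mathbb E_{\boldsymbol\varepsilon}\big[\sup_{f\in\mathcal F}\sum_{i=1}^n\varepsilon_if(\mathbf x_i)\big]$,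 with $\varepsilon_i$ i.i.d. uniform on $\{\pm1\}$. *)

theory Defs
  imports "HOL-Probability.Probability"
begin

definition relu_net :: "nat \<Rightarrow> (nat \<Rightarrow> real^'d) \<Rightarrow> (nat \<Rightarrow> real) \<Rightarrow> real^'d \<Rightarrow> real" where
  "relu_net m W a x = (1 / sqrt (real m)) * (\<Sum>r<m. a r * max (W r \<bullet> x) 0)"

definition frob_dist :: "nat \<Rightarrow> (nat \<Rightarrow> real^'d) \<Rightarrow> (nat \<Rightarrow> real^'d) \<Rightarrow> real" where
  "frob_dist m W W0 = sqrt (\<Sum>r<m. (norm (W r - W0 r))\<^sup>2)"

definition net_class :: "nat \<Rightarrow> (nat \<Rightarrow> real^'d) \<Rightarrow> (nat \<Rightarrow> real) \<Rightarrow> real \<Rightarrow> real \<Rightarrow> (real^'d \<Rightarrow> real) set" where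
  "net_class m W0 a R B =
     {relu_net m W a | W. (\<forall>r<m. norm (W r - W0 r) \<le> R) \<and> frob_dist m W W0 \<le> B}"

definition rademacher :: "nat \<Rightarrow> (nat \<Rightarrow> 'a) \<Rightarrow> ('a \<Rightarrow> real) set \<Rightarrow> real" where
  "rademacher n x F =
     (1 / real n) * measure_pmf.expectation (pmf_of_set ({..<n} \<rightarrow>\<^sub>E {-1, 1::real}))
        (\<lambda>\<epsilon>. SUP f\<in>F. \<Sum>i<n. \<epsilon> i * f (x i))"

definition gauss_vec :: "real \<Rightarrow> (real^'d) measure" where
  "gauss_vec \<kappa> = density lborel
     (\<lambda>w. ennreal ((2 * pi * \<kappa>\<^sup>2) powr (- real CARD('d) / 2) * exp (- (norm w)\<^sup>2 / (2 * \<kappa>\<^sup>2))))"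

definition sign_measure :: "real measure" where
  "sign_measure = measure_pmf (pmf_of_set {-1, 1})"

definition init_measure :: "nat \<Rightarrow> real \<Rightarrow> ((nat \<Rightarrow> real^'d) \<times> (nat \<Rightarrow> real)) measure" where
  "init_measure m \<kappa> = pair_measure (PiM {..<m} (\<lambda>_. gauss_vec \<kappa>)) (PiM {..<m} (\<lambda>_. sign_measure))"

end

theory Submission
  imports Defs
begin

lemma relu_err:
  fixes u v R :: real
  assumes "\<bar>v - u\<bar> \<le> R"
  shows "\<bar>max v 0 - (if u > 0 then 1 else 0) * v\<bar> \<le> 2 * R * (if \<bar>u\<bar> \<le> R then 1 else 0)"
proof (cases "\<bar>u\<bar> \<le> R")
  case True
  then have "\<bar>v\<bar> \<le> 2 * R" using assms by linarith
  moreover have "\<bar>max v 0 - (if u > 0 then 1 else 0) * v\<bar> \<le> \<bar>v\<bar>" by (auto simp: max_def)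
  ultimately show ?thesis using True by simp
next
  case False
  show ?thesis
  proof (cases "u > 0")
    case True
    then have "v > 0" using False assms by linarith
    then show ?thesis using True False by simp
  next
    case f2: False
    then have "v < 0" using False assms by linarith
    then show ?thesis using f2 False by simp
  qed
qed
lemma flip_sum_zero:
  fixes g :: "(nat \<Rightarrow> real) \<Rightarrow> real"
  assumes "i < n"
  assumes "\<And>e. e \<in> {..<n} \<rightarrow>\<^sub>E {-1, 1::real} \<Longrightarrow> g (e(i := - e i)) = - g e"
  shows "(\<Sum>e\<in>{..<n} \<rightarrow>\<^sub>E {-1, 1::real}. g e) = 0"
proof -
  let ?P = "{..<n} \<rightarrow>\<^sub>E {-1, 1::real}"
  let ?h = "\<lambda>e::nat\<Rightarrow>real. e(i := - e i)"
  have bij: "bij_betw ?h ?P ?P"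
  proof (rule bij_betw_byWitness[where f' = ?h])
    show "\<forall>a\<in>?P. ?h (?h a) = a" by auto
    show "\<forall>a\<in>?P. ?h (?h a) = a" by auto
    show "?h ` ?P \<subseteq> ?P"
    proof (rule image_subsetI)
      fix e assume e: "e \<in> ?P"
      show "?h e \<in> ?P"
      proof (rule PiE_I)
        fix j assume j: "j \<in> {..<n}"
        have "e j \<in> {-1, 1}" "e i \<in> {-1, 1}" using e j assms(1) by (auto simp: PiE_iff)
        then show "?h e j \<in> {-1, 1}" by (cases "j = i") auto
      next
        fix j assume j: "j \<notin> {..<n}"
        then have "j \<noteq> i" using assms(1) by auto
        then show "?h e j = undefined" using e j by (auto simp: PiE_iff extensional_def)
      qed
    qed
    then show "?h ` ?P \<subseteq> ?P" .
  qed
  have "(\<Sum>e\<in>?P. g e) = (\<Sum>e\<in>?P. g (?h e))"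
    using sum.reindex_bij_betw[OF bij, of g] by simp
  also have "\<dots> = - (\<Sum>e\<in>?P. g e)"
    using assms(2) by (simp add: sum_negf)
  finally show ?thesis by simp
qed

lemma sum_eps_lin:
  fixes c :: "nat \<Rightarrow> real"
  shows "(\<Sum>e\<in>{..<n} \<rightarrow>\<^sub>E {-1, 1::real}. \<Sum>i<n. e i * c i) = 0"
proof -
  have "(\<Sum>e\<in>{..<n} \<rightarrow>\<^sub>E {-1, 1::real}. \<Sum>i<n. e i * c i)
      = (\<Sum>i<n. \<Sum>e\<in>{..<n} \<rightarrow>\<^sub>E {-1, 1::real}. e i * c i)"
    by (rule sum.swap)
  also have "\<dots> = 0"
  proof (rule sum.neutral, rule ballI)
    fix i assume i: "i \<in> {..<n}"
    show "(\<Sum>e\<in>{..<n} \<rightarrow>\<^sub>E {-1, 1::real}. e i * c i) = 0"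
      by (rule flip_sum_zero[of i]) (use i in simp_all)
  qed
  finally show ?thesis .
qed

lemma sum_eps_quad:
  fixes y :: "nat \<Rightarrow> real^'d"
  shows "(\<Sum>e\<in>{..<n} \<rightarrow>\<^sub>E {-1, 1::real}. (norm (\<Sum>i<n. e i *\<^sub>R y i))\<^sup>2)
       = real (card ({..<n} \<rightarrow>\<^sub>E {-1, 1::real})) * (\<Sum>i<n. (norm (y i))\<^sup>2)"
proof -
  let ?P = "{..<n} \<rightarrow>\<^sub>E {-1, 1::real}"
  have sq: "e i * e i = 1" if "e \<in> ?P" "i < n" for e i
  proof -
    from that have "e i = -1 \<or> e i = 1" by (auto simp: PiE_iff)
    then show ?thesis by auto
  qed
  have "(\<Sum>e\<in>?P. (norm (\<Sum>i<n. e i *\<^sub>R y i))\<^sup>2)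
      = (\<Sum>e\<in>?P. \<Sum>i<n. \<Sum>j<n. (e i * e j) * (y i \<bullet> y j))"
    by (simp add: power2_norm_eq_inner inner_sum_left inner_sum_right sum_distrib_left mult_ac inner_commute)
  also have "\<dots> = (\<Sum>i<n. \<Sum>e\<in>?P. \<Sum>j<n. (e i * e j) * (y i \<bullet> y j))"
    by (rule sum.swap)
  also have "\<dots> = (\<Sum>i<n. \<Sum>j<n. \<Sum>e\<in>?P. (e i * e j) * (y i \<bullet> y j))"
    by (rule sum.cong[OF refl], rule sum.swap)
  also have "\<dots> = (\<Sum>i<n. \<Sum>e\<in>?P. (y i \<bullet> y i))"
  proof (rule sum.cong[OF refl])
    fix i assume i: "i \<in> {..<n}"
    have "(\<Sum>j<n. \<Sum>e\<in>?P. (e i * e j) * (y i \<bullet> y j)) = (\<Sum>j\<in>{i}. \<Sum>e\<in>?P. (e i * e j) * (y i \<bullet> y j))"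
    proof (rule sum.mono_neutral_right)
      show "\<forall>j\<in>{..<n} - {i}. (\<Sum>e\<in>?P. (e i * e j) * (y i \<bullet> y j)) = 0"
      proof
        fix j assume j: "j \<in> {..<n} - {i}"
        show "(\<Sum>e\<in>?P. (e i * e j) * (y i \<bullet> y j)) = 0"
          by (rule flip_sum_zero[of j]) (use j in auto)
      qed
    qed (use i in auto)
    also have "\<dots> = (\<Sum>e\<in>?P. (y i \<bullet> y i))"
      using i by (auto intro!: sum.cong simp: sq)
    finally show "(\<Sum>j<n. \<Sum>e\<in>?P. (e i * e j) * (y i \<bullet> y j)) = (\<Sum>e\<in>?P. (y i \<bullet> y i))" .
  qed
  also have "\<dots> = real (card ?P) * (\<Sum>i<n. (norm (y i))\<^sup>2)"
    by (simp add: power2_norm_eq_inner sum_distrib_left)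
  finally show ?thesis .
qed

lemma det_bound:
  fixes x W0 :: "nat \<Rightarrow> real^'d" and a :: "nat \<Rightarrow> real" and n m :: nat and R B :: real
  assumes n: "n > 0" and m: "m > 0" and xn: "\<And>i. i < n \<Longrightarrow> norm (x i) = 1"
    and a: "\<And>r. r < m \<Longrightarrow> \<bar>a r\<bar> \<le> 1" and R: "R \<ge> 0" and B: "B \<ge> 0"
  shows "rademacher n x (net_class m W0 a R B) \<le>
     B / (real n * sqrt (real m)) * sqrt (\<Sum>r<m. \<Sum>i<n. if W0 r \<bullet> x i > 0 then 1 else 0)
   + 2 * R / (real n * sqrt (real m)) * (\<Sum>r<m. \<Sum>i<n. if \<bar>W0 r \<bullet> x i\<bar> \<le> R then 1 else 0)"
proof -
  define P where "P = {..<n} \<rightarrow>\<^sub>E {-1, 1::real}"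
  have Pfin: "finite P" unfolding P_def by (auto intro!: finite_PiE)
  have Pne: "P \<noteq> {}" unfolding P_def by (auto simp: PiE_eq_empty_iff)
  define s where "s r i = (if W0 r \<bullet> x i > 0 then 1 else 0::real)" for r i
  define A where "A r i = (if \<bar>W0 r \<bullet> x i\<bar> \<le> R then 1 else 0::real)" for r i
  define S1 where "S1 = (\<Sum>r<m. \<Sum>i<n. s r i)"
  define S2 where "S2 = (\<Sum>r<m. \<Sum>i<n. A r i)"
  define c where "c i = (\<Sum>r<m. a r * s r i * (W0 r \<bullet> x i))" for i
  define C where "C e = (1 / sqrt m) * (\<Sum>i<n. e i * c i)" for e :: "nat \<Rightarrow> real"
  define V where "V e r = (\<Sum>i<n. e i *\<^sub>R ((a r * s r i) *\<^sub>R x i))" for e :: "nat \<Rightarrow> real" and r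
  define Q where "Q e = (\<Sum>r<m. (norm (V e r))\<^sup>2)" for e
  define F where "F = net_class m W0 a R B"
  have sqm: "sqrt (real m) > 0" using m by simp
  have key: "(SUP f\<in>F. \<Sum>i<n. e i * f (x i)) \<le> C e + B / sqrt m * sqrt (Q e) + 2 * R / sqrt m * S2"
    if e: "e \<in> P" for e
  proof (rule cSUP_least)
    have "relu_net m W0 a \<in> F" unfolding F_def net_class_def frob_dist_def
      using R B by (intro CollectI exI[where x=W0]) simp
    then show "F \<noteq> {}" by blast
  next
    fix f assume "f \<in> F"
    then obtain W where f: "f = relu_net m W a" and Wr: "\<And>r. r < m \<Longrightarrow> norm (W r - W0 r) \<le> R"
      and WB: "frob_dist m W W0 \<le> B" unfolding F_def net_class_def by auto
    define d where "d r = W r - W0 r" for r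
    define err where "err r i = max (W r \<bullet> x i) 0 - s r i * (W r \<bullet> x i)" for r i
    have eabs: "\<bar>e i\<bar> = 1" if "i < n" for i
    proof -
      have "e i \<in> {-1, 1}" using e that unfolding P_def by (auto simp: PiE_iff)
      then show ?thesis by auto
    qed
    have errb: "\<bar>err r i\<bar> \<le> 2 * R * A r i" if "r < m" "i < n" for r i
    proof -
      have "\<bar>W r \<bullet> x i - W0 r \<bullet> x i\<bar> = \<bar>d r \<bullet> x i\<bar>" by (simp add: d_def inner_diff_left)
      also have "\<dots> \<le> norm (d r) * norm (x i)" by (rule Cauchy_Schwarz_ineq2)
      also have "\<dots> \<le> R" using Wr[OF that(1)] xn[OF that(2)] by (simp add: d_def)
      finally show ?thesis unfolding err_def s_def A_def by (rule relu_err)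
    qed
    have decomp: "max (W r \<bullet> x i) 0 = s r i * (W0 r \<bullet> x i) + s r i * (d r \<bullet> x i) + err r i" for r i
      by (simp add: err_def d_def inner_diff_left algebra_simps)
    have "(\<Sum>i<n. e i * f (x i)) = (1 / sqrt m) * (\<Sum>i<n. \<Sum>r<m. e i * a r * max (W r \<bullet> x i) 0)"
      by (simp add: f relu_net_def sum_distrib_left mult_ac)
    also have "(\<Sum>i<n. \<Sum>r<m. e i * a r * max (W r \<bullet> x i) 0) =
        (\<Sum>i<n. e i * c i) + (\<Sum>i<n. \<Sum>r<m. e i * a r * s r i * (d r \<bullet> x i)) + (\<Sum>i<n. \<Sum>r<m. e i * a r * err r i)"
      by (simp add: decomp c_def sum.distrib sum_distrib_left algebra_simps)
    also have "(\<Sum>i<n. \<Sum>r<m. e i * a r * s r i * (d r \<bullet> x i)) = (\<Sum>r<m. d r \<bullet> V e r)"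
      by (subst sum.swap) (simp add: V_def inner_sum_right sum_distrib_left mult_ac)
    finally have eq: "(\<Sum>i<n. e i * f (x i)) = C e + (1/sqrt m) * (\<Sum>r<m. d r \<bullet> V e r) + (1/sqrt m) * (\<Sum>i<n. \<Sum>r<m. e i * a r * err r i)"
      by (simp add: C_def algebra_simps)
    have t2: "(\<Sum>r<m. d r \<bullet> V e r) \<le> B * sqrt (Q e)"
    proof -
      have "(\<Sum>r<m. d r \<bullet> V e r) \<le> (\<Sum>r<m. \<bar>norm (d r)\<bar> * \<bar>norm (V e r)\<bar>)"
        by (intro sum_mono) (simp add: norm_cauchy_schwarz)
      also have "\<dots> \<le> L2_set (\<lambda>r. norm (d r)) {..<m} * L2_set (\<lambda>r. norm (V e r)) {..<m}"
        by (rule L2_set_mult_ineq)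
      also have "L2_set (\<lambda>r. norm (d r)) {..<m} = frob_dist m W W0" by (simp add: L2_set_def frob_dist_def d_def)
      also have "L2_set (\<lambda>r. norm (V e r)) {..<m} = sqrt (Q e)" by (simp add: L2_set_def Q_def)
      also have "frob_dist m W W0 * sqrt (Q e) \<le> B * sqrt (Q e)"
        by (rule mult_right_mono[OF WB]) (simp add: Q_def sum_nonneg)
      finally show ?thesis .
    qed
    have t3: "(\<Sum>i<n. \<Sum>r<m. e i * a r * err r i) \<le> 2 * R * S2"
    proof -
      have "(\<Sum>i<n. \<Sum>r<m. e i * a r * err r i) \<le> (\<Sum>i<n. \<Sum>r<m. 2 * R * A r i)"
      proof (intro sum_mono)
        fix i r assume i: "i \<in> {..<n}" and r: "r \<in> {..<m}"
        have "\<bar>e i * a r * err r i\<bar> = \<bar>a r\<bar> * \<bar>err r i\<bar>" using eabs i by (simp add: abs_mult)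
        also have "\<dots> \<le> 1 * (2 * R * A r i)"
          using a r errb i r by (intro mult_mono) auto
        finally show "e i * a r * err r i \<le> 2 * R * A r i" by linarith
      qed
      also have "(\<Sum>i<n. \<Sum>r<m. 2 * R * A r i) = 2 * R * (\<Sum>i<n. \<Sum>r<m. A r i)"
        by (simp add: sum_distrib_left)
      also have "(\<Sum>i<n. \<Sum>r<m. A r i) = S2" unfolding S2_def by (rule sum.swap)
      finally show ?thesis .
    qed
    have "(1/sqrt m) * (\<Sum>r<m. d r \<bullet> V e r) \<le> (1/sqrt m) * (B * sqrt (Q e))"
      by (rule mult_left_mono[OF t2]) (use sqm in simp)
    moreover have "(1/sqrt m) * (\<Sum>i<n. \<Sum>r<m. e i * a r * err r i) \<le> (1/sqrt m) * (2 * R * S2)"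
      by (rule mult_left_mono[OF t3]) (use sqm in simp)
    ultimately show "(\<Sum>i<n. e i * f (x i)) \<le> C e + B / sqrt m * sqrt (Q e) + 2 * R / sqrt m * S2"
      unfolding eq by simp
  qed
  have sumC: "(\<Sum>e\<in>P. C e) = 0"
    unfolding C_def P_def by (simp only: sum_distrib_left[symmetric] sum_eps_lin)
  have Qnn: "Q e \<ge> 0" for e unfolding Q_def by (simp add: sum_nonneg)
  have sumQ: "(\<Sum>e\<in>P. Q e) \<le> real (card P) * S1"
  proof -
    have "(\<Sum>e\<in>P. Q e) = (\<Sum>r<m. \<Sum>e\<in>P. (norm (V e r))\<^sup>2)"
      unfolding Q_def by (rule sum.swap)
    also have "\<dots> = (\<Sum>r<m. real (card P) * (\<Sum>i<n. (norm ((a r * s r i) *\<^sub>R x i))\<^sup>2))"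
      unfolding V_def P_def by (rule sum.cong[OF refl]) (rule sum_eps_quad)
    also have "\<dots> \<le> (\<Sum>r<m. real (card P) * (\<Sum>i<n. s r i))"
    proof (intro sum_mono mult_left_mono)
      fix r i assume r: "r \<in> {..<m}" and i: "i \<in> {..<n}"
      have "(norm ((a r * s r i) *\<^sub>R x i))\<^sup>2 = (a r)\<^sup>2 * (s r i)\<^sup>2"
        using xn i by (simp add: power_mult_distrib)
      also have "\<dots> \<le> 1 * s r i"
      proof -
        have "(a r)\<^sup>2 \<le> 1" using a[of r] r by (simp add: abs_square_le_1)
        moreover have "(s r i)\<^sup>2 = s r i" by (simp add: s_def)
        moreover have "s r i \<ge> 0" by (simp add: s_def)
        ultimately show ?thesis using mult_right_mono[of "(a r)\<^sup>2" 1 "s r i"] by simp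
      qed
      finally show "(norm ((a r * s r i) *\<^sub>R x i))\<^sup>2 \<le> s r i" by simp
    qed auto
    also have "\<dots> = real (card P) * S1" by (simp add: S1_def sum_distrib_left)
    finally show ?thesis .
  qed
  have sumsqrt: "(\<Sum>e\<in>P. sqrt (Q e)) \<le> real (card P) * sqrt S1"
  proof -
    have "(\<Sum>e\<in>P. sqrt (Q e)) = (\<Sum>e\<in>P. \<bar>sqrt (Q e)\<bar> * \<bar>1\<bar>)" by (simp add: Qnn)
    also have "\<dots> \<le> L2_set (\<lambda>e. sqrt (Q e)) P * L2_set (\<lambda>_. 1) P" by (rule L2_set_mult_ineq)
    also have "L2_set (\<lambda>e. sqrt (Q e)) P = sqrt (\<Sum>e\<in>P. Q e)"
      by (simp add: L2_set_def Qnn)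
    also have "L2_set (\<lambda>_. 1::real) P = sqrt (real (card P))" by (simp add: L2_set_def)
    also have "sqrt (\<Sum>e\<in>P. Q e) * sqrt (real (card P)) \<le> sqrt (real (card P) * S1) * sqrt (real (card P))"
      by (intro mult_right_mono real_sqrt_le_mono sumQ) simp
    also have "\<dots> = real (card P) * sqrt S1"
      by (simp add: real_sqrt_mult)
    finally show ?thesis .
  qed
  have cP: "real (card P) > 0" using Pfin Pne by (simp add: card_gt_0_iff)
  have "(\<Sum>e\<in>P. (SUP f\<in>F. \<Sum>i<n. e i * f (x i))) \<le> (\<Sum>e\<in>P. C e + B / sqrt m * sqrt (Q e) + 2 * R / sqrt m * S2)"
    by (rule sum_mono) (rule key)
  also have "\<dots> = (\<Sum>e\<in>P. C e) + B / sqrt m * (\<Sum>e\<in>P. sqrt (Q e)) + real (card P) * (2 * R / sqrt m * S2)"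
    by (simp add: sum.distrib sum_distrib_left)
  also have "\<dots> \<le> 0 + B / sqrt m * (real (card P) * sqrt S1) + real (card P) * (2 * R / sqrt m * S2)"
    unfolding sumC using sumsqrt B sqm R by (intro add_mono mult_left_mono) auto
  finally have tot: "(\<Sum>e\<in>P. (SUP f\<in>F. \<Sum>i<n. e i * f (x i))) \<le> real (card P) * (B / sqrt m * sqrt S1 + 2 * R / sqrt m * S2)"
    by (simp add: algebra_simps)
  have "rademacher n x F = (1 / real n) * ((\<Sum>e\<in>P. (SUP f\<in>F. \<Sum>i<n. e i * f (x i))) / real (card P))"
    unfolding rademacher_def P_def[symmetric] by (simp add: integral_pmf_of_set[OF Pne Pfin])
  also have "\<dots> \<le> (1 / real n) * (B / sqrt m * sqrt S1 + 2 * R / sqrt m * S2)"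
    using tot cP n by (intro mult_left_mono) (simp_all add: divide_le_eq mult.commute)
  also have "\<dots> = B / (real n * sqrt (real m)) * sqrt S1 + 2 * R / (real n * sqrt (real m)) * S2"
    by (simp add: add_divide_distrib mult.commute)
  finally show ?thesis unfolding F_def S1_def S2_def s_def A_def .
qed

definition Nk :: "real \<Rightarrow> real measure" where
  "Nk \<kappa> = density lborel (\<lambda>t. ennreal (normal_density 0 \<kappa> t))"

lemma prob_Nk: "\<kappa> > 0 \<Longrightarrow> prob_space (Nk \<kappa>)" unfolding Nk_def by (rule prob_space_normal_density)
lemma sets_Nk[simp, measurable_cong]: "sets (Nk \<kappa>) = sets borel" unfolding Nk_def by simp
lemma space_Nk[simp]: "space (Nk \<kappa>) = UNIV" unfolding Nk_def by simp

lemma prod_ind_PiE: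
  fixes g :: "'i \<Rightarrow> real \<Rightarrow> ennreal"
  assumes fin: "finite I" and f: "f \<in> extensional I"
  shows "(\<Prod>i\<in>I. g i (f i) * indicator (A i) (f i)) = (\<Prod>i\<in>I. g i (f i)) * indicator (Pi\<^sub>E I A) f"
proof (cases "f \<in> Pi\<^sub>E I A")
  case True
  then show ?thesis by (auto simp: PiE_iff indicator_def intro!: prod.cong)
next
  case False
  then obtain i where i: "i \<in> I" "f i \<notin> A i" using f by (auto simp: PiE_iff)
  then have "(\<Prod>i\<in>I. g i (f i) * indicator (A i) (f i)) = 0"
    using fin i by (intro prod_zero) (auto intro!: bexI[of _ i])
  then show ?thesis using False by simp
qed

lemma PiM_Nk:
  fixes I :: "'i set" assumes fin: "finite I" and k: "\<kappa> > 0"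
  shows "PiM I (\<lambda>_. Nk \<kappa>) = density (PiM I (\<lambda>_. lborel)) (\<lambda>f. \<Prod>i\<in>I. ennreal (normal_density 0 \<kappa> (f i)))"
proof -
  interpret N: product_sigma_finite "\<lambda>_::'i. Nk \<kappa>"
    unfolding product_sigma_finite_def using prob_Nk[OF k] prob_space_imp_sigma_finite by blast
  interpret L: product_sigma_finite "\<lambda>_::'i. lborel :: real measure"
    unfolding product_sigma_finite_def by (simp add: lborel.sigma_finite_measure_axioms)
  show ?thesis
  proof (rule N.PiM_eqI[symmetric])
    show "finite I" by fact
    show "sets (density (PiM I (\<lambda>_. lborel)) (\<lambda>f. \<Prod>i\<in>I. ennreal (normal_density 0 \<kappa> (f i)))) = sets (PiM I (\<lambda>_. Nk \<kappa>))"
      by (simp only: sets_density) (rule sets_PiM_cong, auto)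
  next
    fix A assume A: "\<And>i. i \<in> I \<Longrightarrow> A i \<in> sets (Nk \<kappa>)"
    have Am: "Pi\<^sub>E I A \<in> sets (PiM I (\<lambda>_. lborel :: real measure))"
      using A fin by (intro sets_PiM_I_finite) auto
    have "emeasure (density (PiM I (\<lambda>_. lborel)) (\<lambda>f. \<Prod>i\<in>I. ennreal (normal_density 0 \<kappa> (f i)))) (Pi\<^sub>E I A)
        = (\<integral>\<^sup>+f. (\<Prod>i\<in>I. ennreal (normal_density 0 \<kappa> (f i))) * indicator (Pi\<^sub>E I A) f \<partial>PiM I (\<lambda>_. lborel))"
      using Am by (subst emeasure_density) auto
    also have "\<dots> = (\<integral>\<^sup>+f. (\<Prod>i\<in>I. ennreal (normal_density 0 \<kappa> (f i)) * indicator (A i) (f i)) \<partial>PiM I (\<lambda>_. lborel))"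
    proof (intro nn_integral_cong)
      fix f assume "f \<in> space (PiM I (\<lambda>_. lborel :: real measure))"
      then have fe: "f \<in> extensional I" by (simp add: space_PiM PiE_iff)
      show "(\<Prod>i\<in>I. ennreal (normal_density 0 \<kappa> (f i))) * indicator (Pi\<^sub>E I A) f =
          (\<Prod>i\<in>I. ennreal (normal_density 0 \<kappa> (f i)) * indicator (A i) (f i))"
        by (rule prod_ind_PiE[OF fin fe, where g="\<lambda>_ t. ennreal (normal_density 0 \<kappa> t)", symmetric])
    qed
    also have "\<dots> = (\<Prod>i\<in>I. \<integral>\<^sup>+t. ennreal (normal_density 0 \<kappa> t) * indicator (A i) t \<partial>lborel)"
      using A by (intro L.product_nn_integral_prod fin) auto
    also have "\<dots> = (\<Prod>i\<in>I. emeasure (Nk \<kappa>) (A i))"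
      using A by (intro prod.cong refl) (simp add: Nk_def emeasure_density)
    finally show "emeasure (density (PiM I (\<lambda>_. lborel)) (\<lambda>f. \<Prod>i\<in>I. ennreal (normal_density 0 \<kappa> (f i)))) (Pi\<^sub>E I A)
        = (\<Prod>i\<in>I. emeasure (Nk \<kappa>) (A i))" .
  qed
qed

lemma gauss_density_prod:
  fixes f :: "real^'d \<Rightarrow> real"
  assumes k: "\<kappa> > 0"
  shows "(2 * pi * \<kappa>\<^sup>2) powr (- real CARD('d) / 2) * exp (- (norm (\<Sum>b\<in>Basis. f b *\<^sub>R b))\<^sup>2 / (2 * \<kappa>\<^sup>2))
       = (\<Prod>b\<in>(Basis :: (real^'d) set). normal_density 0 \<kappa> (f b))"
proof -
  let ?c = "2 * pi * \<kappa>\<^sup>2"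
  have cpos: "?c > 0" using k by simp
  have n2: "(norm (\<Sum>b\<in>(Basis :: (real^'d) set). f b *\<^sub>R b))\<^sup>2 = (\<Sum>b\<in>(Basis :: (real^'d) set). (f b)\<^sup>2)"
  proof -
    let ?v = "\<Sum>b\<in>(Basis :: (real^'d) set). f b *\<^sub>R b"
    have "(norm ?v)\<^sup>2 = ?v \<bullet> ?v" by (simp add: power2_norm_eq_inner)
    also have "\<dots> = (\<Sum>b\<in>Basis. (?v \<bullet> b) * (?v \<bullet> b))" by (rule euclidean_inner)
    also have "\<dots> = (\<Sum>b\<in>(Basis :: (real^'d) set). (f b)\<^sup>2)" by (simp add: power2_eq_square)
    finally show ?thesis .
  qed
  have pw: "?c powr (- real CARD('d) / 2) = (1 / sqrt ?c) ^ CARD('d)"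
  proof -
    have "?c powr (- real CARD('d) / 2) = 1 / (?c powr (1/2)) powr (real CARD('d))"
      by (simp add: powr_powr powr_minus_divide)
    also have "\<dots> = 1 / (sqrt ?c) ^ CARD('d)"
      using cpos by (simp add: powr_half_sqrt powr_realpow)
    finally show ?thesis by (simp add: power_one_over)
  qed
  have "(\<Prod>b\<in>(Basis :: (real^'d) set). normal_density 0 \<kappa> (f b))
      = (\<Prod>b\<in>(Basis :: (real^'d) set). (1 / sqrt ?c) * exp (- (f b)\<^sup>2 / (2 * \<kappa>\<^sup>2)))"
    by (simp add: normal_density_def)
  also have "\<dots> = (\<Prod>b\<in>(Basis :: (real^'d) set). 1 / sqrt ?c) * (\<Prod>b\<in>(Basis :: (real^'d) set). exp (- (f b)\<^sup>2 / (2 * \<kappa>\<^sup>2)))"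
    by (rule prod.distrib)
  also have "(\<Prod>b\<in>(Basis :: (real^'d) set). 1 / sqrt ?c) = (1 / sqrt ?c) ^ CARD('d)"
    by simp
  also have "(\<Prod>b\<in>(Basis :: (real^'d) set). exp (- (f b)\<^sup>2 / (2 * \<kappa>\<^sup>2))) = exp (\<Sum>b\<in>(Basis :: (real^'d) set). - (f b)\<^sup>2 / (2 * \<kappa>\<^sup>2))"
    by (simp add: exp_sum)
  also have "(\<Sum>b\<in>(Basis :: (real^'d) set). - (f b)\<^sup>2 / (2 * \<kappa>\<^sup>2)) = - (\<Sum>b\<in>(Basis :: (real^'d) set). (f b)\<^sup>2) / (2 * \<kappa>\<^sup>2)"
    by (simp add: sum_divide_distrib sum_negf)
  finally have calc: "(\<Prod>b\<in>(Basis :: (real^'d) set). normal_density 0 \<kappa> (f b)) = (1 / sqrt ?c) ^ CARD('d) * exp (- (\<Sum>b\<in>(Basis :: (real^'d) set). (f b)\<^sup>2) / (2 * \<kappa>\<^sup>2))" .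
  show ?thesis unfolding n2 pw by (rule calc[symmetric])
qed

lemma gauss_eq:
  assumes k: "\<kappa> > 0"
  shows "gauss_vec \<kappa> = distr (PiM (Basis :: (real^'d) set) (\<lambda>_. Nk \<kappa>)) borel (\<lambda>f. \<Sum>b\<in>Basis. f b *\<^sub>R b)"
proof (rule measure_eqI)
  let ?T = "\<lambda>f. \<Sum>b\<in>(Basis :: (real^'d) set). f b *\<^sub>R b"
  let ?g = "\<lambda>w::real^'d. (2 * pi * \<kappa>\<^sup>2) powr (- real CARD('d) / 2) * exp (- (norm w)\<^sup>2 / (2 * \<kappa>\<^sup>2))"
  let ?Phi = "\<lambda>f. \<Prod>i\<in>(Basis :: (real^'d) set). ennreal (normal_density 0 \<kappa> (f i))"
  show "sets (gauss_vec \<kappa>) = sets (distr (PiM (Basis :: (real^'d) set) (\<lambda>_. Nk \<kappa>)) borel ?T)"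
    by (simp add: gauss_vec_def)
  fix A assume "A \<in> sets (gauss_vec \<kappa> :: (real^'d) measure)"
  then have A[measurable]: "A \<in> sets borel" by (simp add: gauss_vec_def)
  have Tm[measurable]: "?T \<in> borel_measurable (PiM (Basis :: (real^'d) set) (\<lambda>_. lborel))"
    by measurable
  have Tm2: "?T \<in> borel_measurable (PiM (Basis :: (real^'d) set) (\<lambda>_. Nk \<kappa>))"
    using Tm by (simp add: measurable_cong_sets[OF sets_PiM_cong[OF refl, of _ "\<lambda>_. Nk \<kappa>" "\<lambda>_. lborel"] refl])
  have sp: "space (PiM (Basis :: (real^'d) set) (\<lambda>_. Nk \<kappa>)) = space (PiM (Basis :: (real^'d) set) (\<lambda>_. lborel))"
    by (simp add: space_PiM)
  have "emeasure (gauss_vec \<kappa> :: (real^'d) measure) A = (\<integral>\<^sup>+w. ennreal (?g w) * indicator A w \<partial>lborel)"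
    unfolding gauss_vec_def by (simp add: emeasure_density)
  also have "\<dots> = (\<integral>\<^sup>+f. ennreal (?g (?T f)) * indicator A (?T f) \<partial>PiM (Basis :: (real^'d) set) (\<lambda>_. lborel))"
    by (subst lborel_eq[where 'a="real^'d"]) (simp add: nn_integral_distr)
  also have "\<dots> = (\<integral>\<^sup>+f. ?Phi f * indicator (?T -` A \<inter> space (PiM (Basis :: (real^'d) set) (\<lambda>_. lborel))) f \<partial>PiM (Basis :: (real^'d) set) (\<lambda>_. lborel))"
  proof (intro nn_integral_cong)
    fix f assume fsp: "f \<in> space (PiM (Basis :: (real^'d) set) (\<lambda>_. lborel :: real measure))"
    show "ennreal (?g (?T f)) * indicator A (?T f) = ?Phi f * indicator (?T -` A \<inter> space (PiM (Basis :: (real^'d) set) (\<lambda>_. lborel))) f"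
    proof -
      have "?g (?T f) = (\<Prod>b\<in>(Basis :: (real^'d) set). normal_density 0 \<kappa> (f b))"
        by (rule gauss_density_prod[OF k])
      then have "ennreal (?g (?T f)) = ?Phi f" by (simp add: prod_ennreal)
      moreover have "indicator A (?T f) = (indicator (?T -` A \<inter> space (PiM (Basis :: (real^'d) set) (\<lambda>_. lborel))) f :: ennreal)"
        using fsp by (simp add: indicator_def)
      ultimately show ?thesis by (simp only:)
    qed
  qed
  also have "\<dots> = emeasure (PiM (Basis :: (real^'d) set) (\<lambda>_. Nk \<kappa>)) (?T -` A \<inter> space (PiM (Basis :: (real^'d) set) (\<lambda>_. Nk \<kappa>)))"
    unfolding PiM_Nk[OF finite_Basis k] sp
    by (subst emeasure_density) (auto intro: measurable_sets[OF Tm] simp: mult.commute)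
  also have "\<dots> = emeasure (distr (PiM (Basis :: (real^'d) set) (\<lambda>_. Nk \<kappa>)) borel ?T) A"
    using Tm2 by (simp add: emeasure_distr)
  finally show "emeasure (gauss_vec \<kappa> :: (real^'d) measure) A = emeasure (distr (PiM (Basis :: (real^'d) set) (\<lambda>_. Nk \<kappa>)) borel ?T) A" .
qed


lemma Nk_meas: "measurable (Nk \<kappa>) N = measurable borel N"
  by (rule measurable_cong_sets) simp_all

lemma gauss_proj:
  fixes x :: "real^'d"
  assumes k: "\<kappa> > 0" and x: "norm x = 1"
  shows "distributed (PiM (Basis :: (real^'d) set) (\<lambda>_. Nk \<kappa>)) lborel
           (\<lambda>f. (\<Sum>b\<in>Basis. f b *\<^sub>R b) \<bullet> x) (\<lambda>t. ennreal (normal_density 0 \<kappa> t))"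
proof -
  let ?M = "PiM (Basis :: (real^'d) set) (\<lambda>_. Nk \<kappa>)"
  interpret P: prob_space ?M by (intro prob_space_PiM prob_Nk k)
  have comp: "distr ?M (Nk \<kappa>) (\<lambda>f. f b) = Nk \<kappa>" if "b \<in> Basis" for b
    using that by (intro distr_PiM_component prob_Nk k)
  have rv: "(\<lambda>f. f i) \<in> measurable ?M (Nk \<kappa>)" if "i \<in> Basis" for i
    using measurable_component_singleton[OF that, of "\<lambda>_. Nk \<kappa>"] by simp
  have eqd: "distr ?M (PiM Basis (\<lambda>_. Nk \<kappa>)) (\<lambda>x. \<lambda>i\<in>Basis. x i) = PiM Basis (\<lambda>i. distr ?M (Nk \<kappa>) (\<lambda>f. f i))"
  proof -
    have "distr ?M ?M (\<lambda>x. \<lambda>i\<in>Basis. x i) = distr ?M ?M (\<lambda>x. x)"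
      by (rule distr_cong) (auto simp: space_PiM PiE_def extensional_def restrict_def fun_eq_iff)
    also have "\<dots> = ?M" by simp
    also have "\<dots> = PiM Basis (\<lambda>i. distr ?M (Nk \<kappa>) (\<lambda>f. f i))"
      by (rule PiM_cong) (auto simp: comp)
    finally show ?thesis .
  qed
  have ind: "P.indep_vars (\<lambda>_. Nk \<kappa>) (\<lambda>b f. f b) Basis"
    using P.indep_vars_iff_distr_eq_PiM'[where I=Basis and M'="\<lambda>_. Nk \<kappa>" and X="\<lambda>b f. f b"] rv eqd by simp
  define I where "I = {b \<in> (Basis::(real^'d) set). b \<bullet> x \<noteq> 0}"
  have Ifin: "finite I" and Isub: "I \<subseteq> Basis" unfolding I_def by auto
  have Ine: "I \<noteq> {}"
  proof
    assume "I = {}"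
    then have "\<forall>b\<in>Basis. x \<bullet> b = 0" by (auto simp: I_def inner_commute)
    then have "x = 0" by (simp add: euclidean_all_zero_iff)
    with x show False by simp
  qed
  define X where "X b f = (b \<bullet> x) * f b" for b :: "real^'d" and f :: "real^'d \<Rightarrow> real"
  have indX: "P.indep_vars (\<lambda>_. borel) X I"
  proof -
    have "P.indep_vars (\<lambda>_. borel) (\<lambda>b f. (\<lambda>t. (b \<bullet> x) * t) (f b)) I"
      by (rule P.indep_vars_compose2[OF P.indep_vars_subset[OF ind Isub]]) (simp add: Nk_meas)
    then show ?thesis unfolding X_def[abs_def] .
  qed
  have distc: "distributed ?M lborel (\<lambda>f. f b) (\<lambda>t. ennreal (normal_density 0 \<kappa> t))" if b: "b \<in> Basis" for b
    unfolding distributed_def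
  proof (intro conjI)
    have "distr ?M lborel (\<lambda>f. f b) = distr ?M (Nk \<kappa>) (\<lambda>f. f b)"
      by (rule distr_cong) simp_all
    also have "\<dots> = Nk \<kappa>" by (rule comp[OF b])
    finally show "distr ?M lborel (\<lambda>f. f b) = density lborel (\<lambda>t. ennreal (normal_density 0 \<kappa> t))"
      by (simp add: Nk_def)
    show "(\<lambda>t. ennreal (normal_density 0 \<kappa> t)) \<in> borel_measurable lborel" by simp
    show "(\<lambda>f. f b) \<in> measurable ?M lborel"
      using rv[OF b] by (simp add: measurable_cong_sets[OF refl, of "Nk \<kappa>" lborel ?M] Nk_meas)
  qed
  have distX: "distributed ?M lborel (X b) (\<lambda>t. ennreal (normal_density 0 (\<bar>b \<bullet> x\<bar> * \<kappa>) t))" if b: "b \<in> I" for b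
  proof -
    have "b \<in> Basis" "b \<bullet> x \<noteq> 0" using b by (auto simp: I_def)
    from P.normal_density_affine[OF distc[OF this(1)] k this(2), of 0]
    show ?thesis by (simp add: X_def[abs_def])
  qed
  have sumd: "distributed ?M lborel (\<lambda>f. \<Sum>b\<in>I. X b f)
       (\<lambda>t. ennreal (normal_density (\<Sum>b\<in>I. 0) (sqrt (\<Sum>b\<in>I. (\<bar>b \<bullet> x\<bar> * \<kappa>)\<^sup>2)) t))"
    by (rule P.sum_indep_normal[OF Ifin Ine indX]) (use k distX in \<open>auto simp: I_def\<close>)
  have sig: "sqrt (\<Sum>b\<in>I. (\<bar>b \<bullet> x\<bar> * \<kappa>)\<^sup>2) = \<kappa>"
  proof -
    have "(\<Sum>b\<in>I. (b \<bullet> x)\<^sup>2) = (\<Sum>b\<in>(Basis::(real^'d) set). (b \<bullet> x)\<^sup>2)"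
      by (rule sum.mono_neutral_left) (auto simp: I_def)
    also have "\<dots> = x \<bullet> x" by (simp add: euclidean_inner[of x x] power2_eq_square inner_commute)
    also have "\<dots> = 1" using x by (simp add: power2_norm_eq_inner[symmetric])
    finally have "(\<Sum>b\<in>I. (\<bar>b \<bullet> x\<bar> * \<kappa>)\<^sup>2) = \<kappa>\<^sup>2"
      by (simp add: power_mult_distrib sum_distrib_right[symmetric])
    then show ?thesis using k by simp
  qed
  have funeq: "(\<lambda>f. (\<Sum>b\<in>Basis. f b *\<^sub>R b) \<bullet> x) = (\<lambda>f. \<Sum>b\<in>I. X b f)"
  proof
    fix f :: "real^'d \<Rightarrow> real"
    have "(\<Sum>b\<in>Basis. f b *\<^sub>R b) \<bullet> x = (\<Sum>b\<in>(Basis::(real^'d) set). X b f)"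
      by (simp add: inner_sum_left X_def mult.commute)
    also have "\<dots> = (\<Sum>b\<in>I. X b f)"
      by (rule sum.mono_neutral_right) (auto simp: I_def X_def)
    finally show "(\<Sum>b\<in>Basis. f b *\<^sub>R b) \<bullet> x = (\<Sum>b\<in>I. X b f)" .
  qed
  show ?thesis using sumd unfolding funeq sig by simp
qed


lemma T_meas: "(\<lambda>f. \<Sum>b\<in>(Basis::(real^'d) set). f b *\<^sub>R b) \<in> borel_measurable (PiM (Basis :: (real^'d) set) (\<lambda>_. Nk \<kappa>))"
proof -
  have "(\<lambda>f. \<Sum>b\<in>(Basis::(real^'d) set). f b *\<^sub>R b) \<in> borel_measurable (PiM (Basis :: (real^'d) set) (\<lambda>_. lborel))"
    by measurable
  then show ?thesis
    by (simp add: measurable_cong_sets[OF sets_PiM_cong[OF refl, of _ "\<lambda>_. Nk \<kappa>" "\<lambda>_. lborel"] refl])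
qed

lemma gauss_prob: "\<kappa> > 0 \<Longrightarrow> prob_space (gauss_vec \<kappa> :: (real^'d) measure)"
  unfolding gauss_eq
  by (intro prob_space.prob_space_distr prob_space_PiM prob_Nk T_meas)

lemma gauss_sets[simp]: "sets (gauss_vec \<kappa> :: (real^'d) measure) = sets borel"
  by (simp add: gauss_vec_def)

lemma gauss_measure_proj:
  fixes x :: "real^'d"
  assumes k: "\<kappa> > 0" and S: "S \<in> sets borel"
  shows "measure (gauss_vec \<kappa> :: (real^'d) measure) {w. w \<bullet> x \<in> S}
       = measure (PiM (Basis :: (real^'d) set) (\<lambda>_. Nk \<kappa>))
           ((\<lambda>f. (\<Sum>b\<in>Basis. f b *\<^sub>R b) \<bullet> x) -` S \<inter> space (PiM (Basis :: (real^'d) set) (\<lambda>_. Nk \<kappa>)))"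
proof -
  have m: "{w::real^'d. w \<bullet> x \<in> S} \<in> sets borel" using S by measurable
  show ?thesis unfolding gauss_eq[OF k]
    by (subst measure_distr[OF T_meas m]) (simp add: vimage_def)
qed

lemma gauss_half:
  fixes x :: "real^'d"
  assumes k: "\<kappa> > 0" and x: "norm x = 1"
  shows "measure (gauss_vec \<kappa> :: (real^'d) measure) {w. w \<bullet> x > 0} \<le> 1/2"
proof -
  let ?M = "PiM (Basis :: (real^'d) set) (\<lambda>_. Nk \<kappa>)"
  interpret P: prob_space ?M by (intro prob_space_PiM prob_Nk k)
  define Y where "Y f = (\<Sum>b\<in>Basis. f b *\<^sub>R b) \<bullet> x" for f :: "real^'d \<Rightarrow> real"
  have D: "distributed ?M lborel Y (\<lambda>t. ennreal (normal_density 0 \<kappa> t))"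
    unfolding Y_def[abs_def] by (rule gauss_proj[OF k x])
  have D2: "distributed ?M lborel (\<lambda>f. - Y f) (\<lambda>t. ennreal (normal_density 0 \<kappa> t))"
    using P.normal_density_affine[OF D k, of "-1" 0] by simp
  define A1 where "A1 = Y -` {0<..} \<inter> space ?M"
  define A2 where "A2 = (\<lambda>f. - Y f) -` {0<..} \<inter> space ?M"
  have e1: "emeasure ?M A1 = (\<integral>\<^sup>+t. ennreal (normal_density 0 \<kappa> t) * indicator {0<..} t \<partial>lborel)"
    unfolding A1_def by (rule distributed_emeasure[OF D]) simp
  have e2: "emeasure ?M A2 = (\<integral>\<^sup>+t. ennreal (normal_density 0 \<kappa> t) * indicator {0<..} t \<partial>lborel)"
    unfolding A2_def by (rule distributed_emeasure[OF D2]) simp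
  have Ym: "Y \<in> borel_measurable ?M" using D by (simp add: distributed_def)
  have A1m: "A1 \<in> P.events" unfolding A1_def using Ym by measurable
  have A2m: "A2 \<in> P.events" unfolding A2_def using Ym by measurable
  have p12: "P.prob A1 = P.prob A2" using e1 e2 by (simp add: measure_def)
  have disj: "A1 \<inter> A2 = {}" by (auto simp: A1_def A2_def)
  have "P.prob A1 + P.prob A2 = P.prob (A1 \<union> A2)"
    using A1m A2m disj by (simp add: P.finite_measure_Union)
  also have "\<dots> \<le> 1" by simp
  finally have "P.prob A1 \<le> 1/2" using p12 by simp
  moreover have "measure (gauss_vec \<kappa> :: (real^'d) measure) {w. w \<bullet> x > 0} = P.prob A1"
    using gauss_measure_proj[OF k, of "{0<..}" x] by (simp add: A1_def Y_def[abs_def])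
  ultimately show ?thesis by simp
qed

lemma gauss_slab:
  fixes x :: "real^'d"
  assumes k: "\<kappa> > 0" and x: "norm x = 1" and R: "R \<ge> 0"
  shows "measure (gauss_vec \<kappa> :: (real^'d) measure) {w. \<bar>w \<bullet> x\<bar> \<le> R} \<le> R / \<kappa>"
proof -
  let ?M = "PiM (Basis :: (real^'d) set) (\<lambda>_. Nk \<kappa>)"
  interpret P: prob_space ?M by (intro prob_space_PiM prob_Nk k)
  define Y where "Y f = (\<Sum>b\<in>Basis. f b *\<^sub>R b) \<bullet> x" for f :: "real^'d \<Rightarrow> real"
  have D: "distributed ?M lborel Y (\<lambda>t. ennreal (normal_density 0 \<kappa> t))"
    unfolding Y_def[abs_def] by (rule gauss_proj[OF k x])
  define A where "A = Y -` {-R..R} \<inter> space ?M"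
  let ?c = "1 / sqrt (2 * pi * \<kappa>\<^sup>2)"
  have "emeasure ?M A = (\<integral>\<^sup>+t. ennreal (normal_density 0 \<kappa> t) * indicator {-R..R} t \<partial>lborel)"
    unfolding A_def by (rule distributed_emeasure[OF D]) simp
  also have "\<dots> \<le> (\<integral>\<^sup>+t. ennreal ?c * indicator {-R..R} t \<partial>lborel)"
  proof (intro nn_integral_mono)
    fix t :: real
    have "normal_density 0 \<kappa> t \<le> ?c"
      unfolding normal_density_def
    proof (rule mult_left_le)
      have "0 \<le> (t - 0)\<^sup>2 / (2 * \<kappa>\<^sup>2)" by simp
      then show "exp (- (t - 0)\<^sup>2 / (2 * \<kappa>\<^sup>2)) \<le> 1" by simp
    qed simp
    then show "ennreal (normal_density 0 \<kappa> t) * indicator {-R..R} t \<le> ennreal ?c * indicator {-R..R} t"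
      by (auto simp: indicator_def intro: ennreal_leI)
  qed
  also have "\<dots> = ennreal ?c * emeasure lborel {-R..R}"
    by (rule nn_integral_cmult_indicator) simp
  also have "emeasure lborel {-R..R} = ennreal (2 * R)" using R by (simp add: emeasure_lborel_Icc_eq)
  also have "ennreal ?c * ennreal (2 * R) = ennreal (?c * (2 * R))"
    by (rule ennreal_mult[symmetric]) (use R in simp_all)
  finally have e: "emeasure ?M A \<le> ennreal (?c * (2 * R))" .
  have pA: "P.prob A \<le> ?c * (2 * R)"
    using e R by (simp add: P.emeasure_eq_measure ennreal_le_iff)
  have "?c * (2 * R) \<le> R / \<kappa>"
  proof -
    have "sqrt (2 * pi * \<kappa>\<^sup>2) = \<kappa> * sqrt (2 * pi)" using k by (simp add: real_sqrt_mult mult.commute)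
    moreover have "sqrt (2 * pi) \<ge> 2"
    proof -
      have "2 * pi \<ge> 2\<^sup>2" using pi_gt3 by simp
      then show ?thesis by (metis real_le_rsqrt)
    qed
    ultimately show ?thesis using k R by (simp add: field_simps mult_left_mono)
  qed
  moreover have "measure (gauss_vec \<kappa> :: (real^'d) measure) {w. \<bar>w \<bullet> x\<bar> \<le> R} = P.prob A"
  proof -
    have "{w::real^'d. \<bar>w \<bullet> x\<bar> \<le> R} = {w. w \<bullet> x \<in> {-R..R}}" by auto
    then show ?thesis
      using gauss_measure_proj[OF k, of "{-R..R}" x] by (simp add: A_def Y_def[abs_def])
  qed
  ultimately show ?thesis using pA by simp
qed

lemma indep_coords:
  fixes G :: "'b measure" and I :: "'i set"
  assumes G: "prob_space G" and ne: "I \<noteq> {}"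
  shows "prob_space.indep_vars (PiM I (\<lambda>_. G)) (\<lambda>_. G) (\<lambda>i \<omega>. \<omega> i) I"
proof -
  let ?M = "PiM I (\<lambda>_. G)"
  interpret P: prob_space ?M by (intro prob_space_PiM G)
  have comp: "distr ?M G (\<lambda>f. f b) = G" if "b \<in> I" for b
    using that by (intro distr_PiM_component G)
  have rv: "(\<lambda>f. f i) \<in> measurable ?M G" if "i \<in> I" for i
    using measurable_component_singleton[OF that, of "\<lambda>_. G"] by simp
  have eqd: "distr ?M (PiM I (\<lambda>_. G)) (\<lambda>x. \<lambda>i\<in>I. x i) = PiM I (\<lambda>i. distr ?M G (\<lambda>f. f i))"
  proof -
    have "distr ?M ?M (\<lambda>x. \<lambda>i\<in>I. x i) = distr ?M ?M (\<lambda>x. x)"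
      by (rule distr_cong) (auto simp: space_PiM PiE_def extensional_def restrict_def fun_eq_iff)
    also have "\<dots> = ?M" by simp
    also have "\<dots> = PiM I (\<lambda>i. distr ?M G (\<lambda>f. f i))"
      by (rule PiM_cong) (auto simp: comp)
    finally show ?thesis .
  qed
  show ?thesis
    using P.indep_vars_iff_distr_eq_PiM'[where I=I and M'="\<lambda>_. G" and X="\<lambda>b f. f b"] rv eqd ne by simp
qed

lemma hoeff_coord:
  fixes G :: "'b measure" and S :: "nat \<Rightarrow> 'b set" and n m :: nat and \<delta> p :: real
  assumes G: "prob_space G" and S: "\<And>i. i < n \<Longrightarrow> S i \<in> sets G" and n: "n > 0" and m: "m > 0"
    and d0: "0 < \<delta>" and d1: "\<delta> < 1"
    and bnd: "\<And>i. i < n \<Longrightarrow> measure G (S i) \<le> p"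
  shows "\<exists>H\<in>sets (PiM {..<m} (\<lambda>_. G)). measure (PiM {..<m} (\<lambda>_. G)) H \<ge> 1 - \<delta>/2 \<and>
     (\<forall>W\<in>H. (\<Sum>r<m. \<Sum>i<n. indicator (S i) (W r)) \<le> real n * (real m * p + sqrt (real m * ln (2/\<delta>) / 2)))"
proof -
  let ?M = "PiM {..<m} (\<lambda>_. G)"
  interpret P: prob_space ?M by (intro prob_space_PiM G)
  interpret G: prob_space G by (rule G)
  define g where "g w = (1 / real n) * (\<Sum>i<n. indicator (S i) w :: real)" for w
  define X where "X r W = g (W r)" for r and W :: "nat \<Rightarrow> 'b"
  have gm: "g \<in> borel_measurable G" unfolding g_def using S by measurable
  have ind: "P.indep_vars (\<lambda>_. borel) X {..<m}"
  proof -
    have "P.indep_vars (\<lambda>_. borel) (\<lambda>r W. g (W r)) {..<m}"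
      by (rule P.indep_vars_compose2[OF indep_coords[OF G]]) (use m gm in auto)
    then show ?thesis unfolding X_def[abs_def] .
  qed
  have g01: "g w \<in> {0..1}" for w
  proof -
    have "(\<Sum>i<n. indicator (S i) w :: real) \<le> (\<Sum>i<n. 1)"
      by (intro sum_mono) (simp add: indicator_def)
    then have "(\<Sum>i<n. indicator (S i) w :: real) \<le> real n" by simp
    moreover have "(\<Sum>i<n. indicator (S i) w :: real) \<ge> 0" by (intro sum_nonneg) simp
    ultimately show ?thesis using n by (simp add: g_def field_simps)
  qed
  define \<mu> where "\<mu> = (\<Sum>r<m. P.expectation (X r))"
  interpret H: Hoeffding_ineq ?M "{..<m}" X "\<lambda>_. 0" "\<lambda>_. 1" \<mu>
  proof unfold_locales
    show "finite {..<m}" by simp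
    show "P.indep_vars (\<lambda>_. borel) X {..<m}" by (rule ind)
    fix i assume "i \<in> {..<m}"
    show "AE x in ?M. X i x \<in> {0..1}" by (rule AE_I2) (use g01 in \<open>auto simp: X_def\<close>)
  qed (simp add: \<mu>_def)
  have EX: "P.expectation (X r) \<le> p" if r: "r < m" for r
  proof -
    have "P.expectation (X r) = integral\<^sup>L (distr ?M G (\<lambda>W. W r)) g"
      unfolding X_def by (rule integral_distr[symmetric]) (use r gm in simp_all)
    also have "distr ?M G (\<lambda>W. W r) = G" using r by (intro distr_PiM_component G) simp
    also have "integral\<^sup>L G g = (1 / real n) * (\<Sum>i<n. measure G (S i))"
    proof -
      have "integral\<^sup>L G g = (1 / real n) * integral\<^sup>L G (\<lambda>w. \<Sum>i<n. indicator (S i) w :: real)"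
        unfolding g_def by simp
      also have "integral\<^sup>L G (\<lambda>w. \<Sum>i<n. indicator (S i) w :: real) = (\<Sum>i<n. integral\<^sup>L G (indicator (S i)))"
        by (rule Bochner_Integration.integral_sum[where f="\<lambda>i. indicator (S i)"]) (use S in \<open>auto simp: G.emeasure_eq_measure\<close>)
      also have "\<dots> = (\<Sum>i<n. measure G (S i))"
        using S by (intro sum.cong refl) (simp add: Int_absorb2 sets.sets_into_space)
      finally show ?thesis .
    qed
    also have "\<dots> \<le> (1 / real n) * (\<Sum>i<n. p)"
      using bnd by (intro mult_left_mono sum_mono) auto
    also have "\<dots> = p" using n by simp
    finally show ?thesis .
  qed
  have mu: "\<mu> \<le> real m * p"
  proof -
    have "\<mu> \<le> (\<Sum>r<m. p)" unfolding \<mu>_def by (intro sum_mono EX) simp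
    then show ?thesis by simp
  qed
  define \<epsilon> where "\<epsilon> = sqrt (real m * ln (2/\<delta>) / 2)"
  have L: "ln (2/\<delta>) > 0" using d0 d1 by simp
  have eps: "\<epsilon> \<ge> 0" unfolding \<epsilon>_def using L by simp
  define Hb where "Hb = {W\<in>space ?M. (\<Sum>r<m. X r W) \<ge> \<mu> + \<epsilon>}"
  have Xm: "X r \<in> borel_measurable ?M" if "r < m" for r
    using that H.random_variable by simp
  have Hbm: "Hb \<in> P.events" unfolding Hb_def using Xm by measurable
  have "P.prob Hb \<le> exp (-2 * \<epsilon>\<^sup>2 / (\<Sum>i<m. (1 - 0)\<^sup>2))"
    unfolding Hb_def by (rule H.Hoeffding_ineq_ge[OF eps]) (use m in simp)
  also have "-2 * \<epsilon>\<^sup>2 / (\<Sum>i<m. (1 - 0)\<^sup>2) = - ln (2/\<delta>)"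
    unfolding \<epsilon>_def using m L by simp
  also have "exp (- ln (2/\<delta>)) = \<delta>/2" using d0 by (simp add: exp_minus)
  finally have pHb: "P.prob Hb \<le> \<delta>/2" .
  define Hg where "Hg = space ?M - Hb"
  have Hgm: "Hg \<in> sets ?M" unfolding Hg_def using Hbm by auto
  have "P.prob Hg = 1 - P.prob Hb" unfolding Hg_def by (rule P.prob_compl[OF Hbm])
  then have pHg: "P.prob Hg \<ge> 1 - \<delta>/2" using pHb by simp
  show ?thesis
  proof (intro bexI conjI ballI)
    show "P.prob Hg \<ge> 1 - \<delta>/2" by (rule pHg)
    show "Hg \<in> sets ?M" by (rule Hgm)
    fix W assume "W \<in> Hg"
    then have lt: "(\<Sum>r<m. X r W) < \<mu> + \<epsilon>" by (auto simp: Hg_def Hb_def)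
    have "(\<Sum>r<m. \<Sum>i<n. indicator (S i) (W r) :: real) = real n * (\<Sum>r<m. X r W)"
      using n by (simp add: X_def g_def sum_distrib_left)
    also have "\<dots> \<le> real n * (real m * p + \<epsilon>)"
      using lt mu by (intro mult_left_mono) simp_all
    finally show "(\<Sum>r<m. \<Sum>i<n. indicator (S i) (W r)) \<le> real n * (real m * p + sqrt (real m * ln (2/\<delta>) / 2))"
      unfolding \<epsilon>_def .
  qed
qed

lemma final_arith:
  fixes n m :: nat and B R \<kappa> L S1 S2 :: real
  assumes n: "n > 0" and m: "m > 0" and B: "B \<ge> 0" and R: "R \<ge> 0" and k: "\<kappa> > 0" and L: "L > 0"
    and S1: "0 \<le> S1" "S1 \<le> real n * (real m * (1/2) + sqrt (real m * L / 2))"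
    and S2: "S2 \<le> real n * (real m * (R / \<kappa>) + sqrt (real m * L / 2))"
  shows "B / (real n * sqrt (real m)) * sqrt S1 + 2 * R / (real n * sqrt (real m)) * S2
     \<le> B / sqrt (2 * real n) * (1 + (2 * L / real m) powr (1/4)) + 2 * R\<^sup>2 * sqrt (real m) / \<kappa> + R * sqrt (2 * L)"
proof -
  define a where "a = sqrt (real m)"
  define h where "h = sqrt (L / 2)"
  have a: "a > 0" unfolding a_def using m by simp
  have h: "h > 0" unfolding h_def using L by simp
  have a2: "a\<^sup>2 = real m" unfolding a_def by simp
  have e: "sqrt (real m * L / 2) = a * h"
    unfolding a_def h_def by (simp add: real_sqrt_mult[symmetric])
  have s2L: "sqrt (2 * L) = 2 * h"
  proof -
    have "2 * L = 2\<^sup>2 * (L / 2)" by simp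
    then have "sqrt (2 * L) = sqrt (2\<^sup>2) * sqrt (L / 2)" by (metis real_sqrt_mult)
    then show ?thesis unfolding h_def by simp
  qed
  have t4: "(2 * L / real m) powr (1/4) = sqrt (2 * h / a)"
  proof -
    have pos: "2 * L / real m \<ge> 0" using L m by simp
    have "(2 * L / real m) powr (1/4) = ((2 * L / real m) powr (1/2)) powr (1/2)"
      by (simp add: powr_powr)
    also have "\<dots> = sqrt (sqrt (2 * L / real m))"
      using pos by (simp add: powr_half_sqrt)
    also have "sqrt (2 * L / real m) = 2 * h / a"
      unfolding a_def by (simp add: real_sqrt_divide s2L)
    finally show ?thesis .
  qed
  have S1': "S1 \<le> (real n / 2 * a\<^sup>2) * (1 + 2 * h / a)"
  proof -
    have eqn: "(real n / 2 * a\<^sup>2) * (1 + 2 * h / a) = real n * (real m * (1/2) + a * h)"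
      using a by (simp add: a2[symmetric] field_simps power2_eq_square)
    show ?thesis unfolding eqn using S1(2) unfolding e .
  qed
  have q: "sqrt S1 \<le> sqrt (real n / 2) * a * sqrt (1 + 2 * h / a)"
  proof -
    have "sqrt S1 \<le> sqrt ((real n / 2 * a\<^sup>2) * (1 + 2 * h / a))" by (rule real_sqrt_le_mono[OF S1'])
    also have "\<dots> = sqrt (real n / 2) * sqrt (a\<^sup>2) * sqrt (1 + 2 * h / a)"
      by (simp only: real_sqrt_mult)
    also have "sqrt (a\<^sup>2) = a" using a by simp
    finally show ?thesis .
  qed
  have r1: "sqrt (1 + 2 * h / a) \<le> 1 + sqrt (2 * h / a)"
    using sqrt_add_le_add_sqrt[of 1 "2 * h / a"] a h by simp
  have nn: "sqrt (real n / 2) / real n = 1 / sqrt (2 * real n)"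
  proof -
    have "sqrt (real n / 2) * sqrt (2 * real n) = real n"
      by (simp add: real_sqrt_mult[symmetric])
    then show ?thesis using n by (simp add: field_simps)
  qed
  have T1: "B / (real n * sqrt (real m)) * sqrt S1 \<le> B / sqrt (2 * real n) * (1 + (2 * L / real m) powr (1/4))"
  proof -
    have "B / (real n * sqrt (real m)) * sqrt S1 \<le> B / (real n * a) * (sqrt (real n / 2) * a * sqrt (1 + 2 * h / a))"
      unfolding a_def[symmetric] using q B n a by (intro mult_left_mono) simp_all
    also have "\<dots> = B * (sqrt (real n / 2) / real n) * sqrt (1 + 2 * h / a)"
      using a n by (simp add: field_simps)
    also have "\<dots> = B / sqrt (2 * real n) * sqrt (1 + 2 * h / a)" by (simp add: nn)
    also have "\<dots> \<le> B / sqrt (2 * real n) * (1 + sqrt (2 * h / a))"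
      using r1 B by (intro mult_left_mono) simp_all
    finally show ?thesis unfolding t4 .
  qed
  have T2: "2 * R / (real n * sqrt (real m)) * S2 \<le> 2 * R\<^sup>2 * sqrt (real m) / \<kappa> + R * sqrt (2 * L)"
  proof -
    have "2 * R / (real n * sqrt (real m)) * S2 \<le> 2 * R / (real n * a) * (real n * (a\<^sup>2 * (R / \<kappa>) + a * h))"
      unfolding a_def[symmetric] using S2 e a2 R n a by (intro mult_left_mono) simp_all
    also have "\<dots> = 2 * R\<^sup>2 * a / \<kappa> + R * (2 * h)"
      using a n k by (simp add: field_simps power2_eq_square)
    finally show ?thesis unfolding a_def s2L .
  qed
  show ?thesis using T1 T2 by simp
qed

theorem lemma5p2:
  fixes x :: "nat \<Rightarrow> real^'d" and n m :: nat and \<kappa> R \<delta> :: real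
  assumes "n > 0" and "m > 0" and "\<kappa> > 0"
    and "\<And>i. i < n \<Longrightarrow> norm (x i) = 1"
    and "R > 0" and "0 < \<delta>" and "\<delta> < 1"
  shows "\<exists>E \<in> sets (init_measure m \<kappa>).
           measure (init_measure m \<kappa>) E \<ge> 1 - \<delta> \<and>
           (\<forall>(W0, a) \<in> E. \<forall>B > 0.
              rademacher n x (net_class m W0 a R B)
                \<le> B / sqrt (2 * real n) * (1 + (2 * ln (2 / \<delta>) / real m) powr (1/4))
                  + 2 * R\<^sup>2 * sqrt (real m) / \<kappa> + R * sqrt (2 * ln (2 / \<delta>)))"
proof -
  note n = assms(1) and m = assms(2) and k = assms(3) and xn = assms(4) and R = assms(5)
    and d0 = assms(6) and d1 = assms(7)
  let ?G = "gauss_vec \<kappa> :: (real^'d) measure"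
  let ?M1 = "PiM {..<m} (\<lambda>_. ?G)"
  let ?M2 = "PiM {..<m} (\<lambda>_. sign_measure)"
  have G: "prob_space ?G" by (rule gauss_prob[OF k])
  interpret P1: prob_space ?M1 by (intro prob_space_PiM G)
  have sgn: "prob_space sign_measure" unfolding sign_measure_def by (rule prob_space_measure_pmf)
  interpret P2: prob_space ?M2 by (intro prob_space_PiM sgn)
  define S1 where "S1 i = {w::real^'d. w \<bullet> x i > 0}" for i
  define S2 where "S2 i = {w::real^'d. \<bar>w \<bullet> x i\<bar> \<le> R}" for i
  have S1m: "S1 i \<in> sets ?G" for i unfolding S1_def by simp
  have S2m: "S2 i \<in> sets ?G" for i unfolding S2_def by simp
  have ex1: "\<exists>H\<in>sets ?M1. measure ?M1 H \<ge> 1 - \<delta>/2 \<and>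
     (\<forall>W\<in>H. (\<Sum>r<m. \<Sum>i<n. indicator (S1 i) (W r)) \<le> real n * (real m * (1/2) + sqrt (real m * ln (2/\<delta>) / 2)))"
  proof (rule hoeff_coord[OF G _ n m d0 d1, where S=S1 and p="1/2"])
    show "S1 i \<in> sets ?G" if "i < n" for i by (rule S1m)
    show "measure ?G (S1 i) \<le> 1/2" if "i < n" for i
      unfolding S1_def using gauss_half[OF k xn[OF that]] .
  qed
  then obtain H1 where H1: "H1 \<in> sets ?M1" "measure ?M1 H1 \<ge> 1 - \<delta>/2"
     "\<forall>W\<in>H1. (\<Sum>r<m. \<Sum>i<n. indicator (S1 i) (W r)) \<le> real n * (real m * (1/2) + sqrt (real m * ln (2/\<delta>) / 2))"
    by blast
  have ex2: "\<exists>H\<in>sets ?M1. measure ?M1 H \<ge> 1 - \<delta>/2 \<and>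
     (\<forall>W\<in>H. (\<Sum>r<m. \<Sum>i<n. indicator (S2 i) (W r)) \<le> real n * (real m * (R / \<kappa>) + sqrt (real m * ln (2/\<delta>) / 2)))"
  proof (rule hoeff_coord[OF G _ n m d0 d1, where S=S2 and p="R / \<kappa>"])
    show "S2 i \<in> sets ?G" if "i < n" for i by (rule S2m)
    show "measure ?G (S2 i) \<le> R / \<kappa>" if "i < n" for i
      unfolding S2_def using gauss_slab[OF k xn[OF that]] R by simp
  qed
  then obtain H2 where H2: "H2 \<in> sets ?M1" "measure ?M1 H2 \<ge> 1 - \<delta>/2"
     "\<forall>W\<in>H2. (\<Sum>r<m. \<Sum>i<n. indicator (S2 i) (W r)) \<le> real n * (real m * (R / \<kappa>) + sqrt (real m * ln (2/\<delta>) / 2))"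
    by blast
  define P where "P = Pi\<^sub>E {..<m} (\<lambda>_. {-1, 1::real})"
  define E where "E = (H1 \<inter> H2) \<times> P"
  have Pm: "P \<in> sets ?M2" unfolding P_def by (intro sets_PiM_I_finite) (simp_all add: sign_measure_def)
  have EM: "E \<in> sets (init_measure m \<kappa>)"
    unfolding E_def init_measure_def using H1(1) H2(1) Pm by (intro pair_measureI) auto
  have P2P: "emeasure ?M2 P = 1"
  proof -
    interpret PS: product_sigma_finite "\<lambda>_::nat. sign_measure"
      unfolding product_sigma_finite_def using sgn prob_space_imp_sigma_finite by blast
    have "emeasure ?M2 P = (\<Prod>i<m. emeasure sign_measure {-1, 1})"
      unfolding P_def by (rule PS.emeasure_PiM) (simp_all add: sign_measure_def)
    also have "emeasure sign_measure {-1, 1} = 1"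
      unfolding sign_measure_def by (simp add: emeasure_pmf_of_set)
    finally show ?thesis by simp
  qed
  have H12: "measure ?M1 (H1 \<inter> H2) \<ge> 1 - \<delta>"
  proof -
    have "P1.prob (space ?M1 - (H1 \<inter> H2)) \<le> P1.prob (space ?M1 - H1) + P1.prob (space ?M1 - H2)"
    proof -
      have "space ?M1 - (H1 \<inter> H2) = (space ?M1 - H1) \<union> (space ?M1 - H2)" by auto
      then show ?thesis using H1(1) H2(1) by (simp add: measure_Un_le)
    qed
    also have "\<dots> = (1 - P1.prob H1) + (1 - P1.prob H2)"
      using H1(1) H2(1) by (simp add: P1.prob_compl)
    finally have "P1.prob (space ?M1 - (H1 \<inter> H2)) \<le> \<delta>" using H1(2) H2(2) by simp
    moreover have "P1.prob (space ?M1 - (H1 \<inter> H2)) = 1 - P1.prob (H1 \<inter> H2)"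
      using H1(1) H2(1) by (intro P1.prob_compl) auto
    ultimately show ?thesis by simp
  qed
  have ME: "measure (init_measure m \<kappa>) E = measure ?M1 (H1 \<inter> H2)"
  proof -
    have "emeasure (init_measure m \<kappa>) E = emeasure ?M1 (H1 \<inter> H2) * emeasure ?M2 P"
      unfolding E_def init_measure_def using H1(1) H2(1) Pm by (intro P2.emeasure_pair_measure_Times) auto
    then have "emeasure (init_measure m \<kappa>) E = ennreal (measure ?M1 (H1 \<inter> H2))"
      using P2P by (simp add: P1.emeasure_eq_measure)
    then show ?thesis by (simp add: measure_def)
  qed
  have main: "rademacher n x (net_class m W0 a R B)
                \<le> B / sqrt (2 * real n) * (1 + (2 * ln (2 / \<delta>) / real m) powr (1/4))
                  + 2 * R\<^sup>2 * sqrt (real m) / \<kappa> + R * sqrt (2 * ln (2 / \<delta>))"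
    if WA: "(W0, a) \<in> E" and B: "B > 0" for W0 a B
  proof -
    have W1: "W0 \<in> H1" and W2: "W0 \<in> H2" and aP: "a \<in> P" using WA by (auto simp: E_def)
    have a1: "\<bar>a r\<bar> \<le> 1" if "r < m" for r
    proof -
      have "a r \<in> {-1, 1}" using aP that by (auto simp: P_def PiE_iff)
      then show ?thesis by auto
    qed
    define T1 where "T1 = (\<Sum>r<m. \<Sum>i<n. if W0 r \<bullet> x i > 0 then 1 else 0::real)"
    define T2 where "T2 = (\<Sum>r<m. \<Sum>i<n. if \<bar>W0 r \<bullet> x i\<bar> \<le> R then 1 else 0::real)"
    have T1e: "T1 = (\<Sum>r<m. \<Sum>i<n. indicator (S1 i) (W0 r))" unfolding T1_def S1_def by (simp only: indicator_def mem_Collect_eq of_bool_def)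
    have T2e: "T2 = (\<Sum>r<m. \<Sum>i<n. indicator (S2 i) (W0 r))" unfolding T2_def S2_def by (simp only: indicator_def mem_Collect_eq of_bool_def)
    have T1n: "T1 \<ge> 0" unfolding T1_def by (intro sum_nonneg) simp
    have "rademacher n x (net_class m W0 a R B) \<le>
       B / (real n * sqrt (real m)) * sqrt T1 + 2 * R / (real n * sqrt (real m)) * T2"
      unfolding T1_def T2_def by (rule det_bound[OF n m xn a1]) (use R B in simp_all)
    also have "\<dots> \<le> B / sqrt (2 * real n) * (1 + (2 * ln (2 / \<delta>) / real m) powr (1/4))
                  + 2 * R\<^sup>2 * sqrt (real m) / \<kappa> + R * sqrt (2 * ln (2 / \<delta>))"
      by (rule final_arith[OF n m _ _ k _ T1n]) (use B R d0 d1 H1(3) H2(3) W1 W2 T1e T2e in auto)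
    finally show ?thesis .
  qed
  show ?thesis
  proof (rule bexI[OF _ EM], intro conjI)
    show "measure (init_measure m \<kappa>) E \<ge> 1 - \<delta>" using ME H12 by simp
    show "\<forall>(W0, a) \<in> E. \<forall>B > 0.
              rademacher n x (net_class m W0 a R B)
                \<le> B / sqrt (2 * real n) * (1 + (2 * ln (2 / \<delta>) / real m) powr (1/4))
                  + 2 * R\<^sup>2 * sqrt (real m) / \<kappa> + R * sqrt (2 * ln (2 / \<delta>))"
      using main by blast
  qed
qed

end
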